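(* Let $k_0(p),k_1(p)$ be complex-valued functions of $p$ with $|k_0(p)|^2+|k_1(p)|^2=1$. The tuple $(k_0(p),k_1(p))$ is simulable if and only if $\frac{k_0(p)}{k_1(p)}$ belongs to the field generated by $\sqrt{\frac{p}{1-p}}$ and $\mathbb{C}$; equivalently, if and only if there exist polynomials $g_1,g_2,g_3,g_4$ in $p$ with complex coefficients ($g_2,g_4\neq 0$) such that $$\frac{k_0(p)}{k_1(p)}=\frac{g_1(p)}{g_2(p)}\sqrt{\frac{p}{1-p}}+\frac{g_3(p)}{g_4(p)}.$$
   Context: Let $p\in[0,1]$ be an unknown parameter and let $|p\rangle=\sqrt{p}|0\rangle+\sqrt{1-p}|1\rangle$ (the "quantum coin"). For a complex function $h(p)$ write $|f_h\rangle=\frac{1}{\sqrt{1+|h(p)|^2}}(h(p)|0\rangle+|1\rangle)$. A tuple $(k_0(p),k_1(p))$ of complex functions with $|k_0|^2+|k_1|^2=1$ is called simulable if, starting from an unbounded supply of copies of $|p\rangle$, one can produce the single-qubit state $|f_{k_0/k_1}\rangle=k_0(p)|0\rangle+k_1(p)|1\rangle$ (up to a global phase) in finitely many steps with nonzero success probability, where each step applies a unitary transformation or a measurement (in the computational basis) to the current state together with auxiliary qubits; the operations may not depend on $p$. Auxiliary qubits may be other simulable states or constant states $|a_c\rangle=\frac{1}{\sqrt{|a|^2+1}}(a|0\rangle+|1\rangle)$ with $a\in\mathbb{C}$ a constant independent of $p$. *)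

theory Defs
  imports Complex_Main "HOL-Computational_Algebra.Polynomial"
begin

text \<open>An (unnormalised) state of n qubits is a map from basis indices i < 2^n
  (qubit 0 is the most significant bit, the last qubit is the least
  significant one) to complex amplitudes; entries with index \<ge> 2^n are 0.
  A family of such states indexed by the coin parameter p is a function
  real \<Rightarrow> nat \<Rightarrow> complex.\<close>

definition qcoin :: "real \<Rightarrow> nat \<Rightarrow> complex" where
  "qcoin p i = (if i = 0 then complex_of_real (sqrt p)
                else if i = 1 then complex_of_real (sqrt (1 - p)) else 0)"

definition const_state :: "complex \<Rightarrow> nat \<Rightarrow> complex" where
  "const_state a i = (if i = 0 then a / complex_of_real (sqrt ((cmod a)\<^sup>2 + 1))
                      else if i = 1 then 1 / complex_of_real (sqrt ((cmod a)\<^sup>2 + 1))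
                      else 0)"

definition tensor :: "nat \<Rightarrow> nat \<Rightarrow> (nat \<Rightarrow> complex) \<Rightarrow> (nat \<Rightarrow> complex) \<Rightarrow> nat \<Rightarrow> complex" where
  "tensor m n v w i = (if i < 2 ^ (m + n) then v (i div 2 ^ n) * w (i mod 2 ^ n) else 0)"

definition unitary_on :: "nat \<Rightarrow> (nat \<Rightarrow> nat \<Rightarrow> complex) \<Rightarrow> bool" where
  "unitary_on n U \<longleftrightarrow> (\<forall>i < 2 ^ n. \<forall>j < 2 ^ n.
      (\<Sum>k < 2 ^ n. cnj (U k i) * U k j) = (if i = j then 1 else 0))"

definition apply_op :: "nat \<Rightarrow> (nat \<Rightarrow> nat \<Rightarrow> complex) \<Rightarrow> (nat \<Rightarrow> complex) \<Rightarrow> nat \<Rightarrow> complex" where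
  "apply_op n U v i = (if i < 2 ^ n then (\<Sum>j < 2 ^ n. U i j * v j) else 0)"

text \<open>Computational-basis measurement of the last qubit of an (n+1)-qubit state,
  post-selected on outcome b; the measured qubit is removed.  The result is the
  unnormalised post-measurement state (its squared norm is the probability of
  this branch).\<close>
definition measure_last :: "nat \<Rightarrow> nat \<Rightarrow> (nat \<Rightarrow> complex) \<Rightarrow> nat \<Rightarrow> complex" where
  "measure_last n b v i = (if i < 2 ^ n then v (2 * i + b) else 0)"

text \<open>States (families, up to a nonzero scalar factor) obtainable by a
  p-independent protocol along one branch of measurement outcomes.\<close>
inductive reach :: "nat \<Rightarrow> (real \<Rightarrow> nat \<Rightarrow> complex) \<Rightarrow> bool" where
  start: "reach 0 (\<lambda>p i. if i = 0 then 1 else 0)"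
| add_coin: "reach n v \<Longrightarrow> reach (n + 1) (\<lambda>p. tensor n 1 (v p) (qcoin p))"
| add_const: "reach n v \<Longrightarrow> reach (n + 1) (\<lambda>p. tensor n 1 (v p) (const_state a))"
| add_sim: "reach n v \<Longrightarrow> reach 1 w \<Longrightarrow> reach (n + 1) (\<lambda>p. tensor n 1 (v p) (w p))"
| unitary: "reach n v \<Longrightarrow> unitary_on n U \<Longrightarrow> reach n (\<lambda>p. apply_op n U (v p))"
| measure: "reach (n + 1) v \<Longrightarrow> b < 2 \<Longrightarrow> reach n (\<lambda>p. measure_last n b (v p))"

text \<open>The tuple (k0,k1) is simulable if some protocol produces, for all but
  finitely many p in [0,1], a single-qubit output with nonzero success
  probability which equals k0|0> + k1|1> up to a (p-dependent) nonzero scalar,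
  i.e. up to normalisation and global phase.\<close>
definition simulable :: "(real \<Rightarrow> complex) \<Rightarrow> (real \<Rightarrow> complex) \<Rightarrow> bool" where
  "simulable k0 k1 \<longleftrightarrow> (\<exists>v. reach 1 v \<and>
     finite {p \<in> {0..1}. \<not> ((v p 0 \<noteq> 0 \<or> v p 1 \<noteq> 0) \<and>
        (\<exists>c. c \<noteq> 0 \<and> v p 0 = c * k0 p \<and> v p 1 = c * k1 p))})"

end

theory Submission
  imports Defs
begin


lemma id_ee: fixes S T x a d a' d' :: complex
  assumes "S^2 = x" "T^2 = 1 - x"
  shows "(a + d*S*T)*(a' + d'*S*T) = (a*a' + d*d'*(x - x^2)) + (a*d' + d*a')*S*T"
proof -
  have "(a + d*S*T)*(a' + d'*S*T) = a*a' + (a*d'+d*a')*S*T + d*d'*(S^2*T^2)" by (simp add: algebra_simps power2_eq_square)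
  also have "S^2*T^2 = x - x^2" unfolding assms by (simp add: algebra_simps power2_eq_square)
  finally show ?thesis by (simp add: algebra_simps)
qed

lemma id_eo: fixes S T x a d b c :: complex
  assumes "S^2 = x" "T^2 = 1 - x"
  shows "(a + d*S*T)*(b*S + c*T) = (a*b + d*c*(1-x))*S + (a*c + d*b*x)*T"
proof -
  have "(a + d*S*T)*(b*S + c*T) = a*b*S + a*c*T + d*b*(S^2)*T + d*c*(T^2)*S" by (simp add: algebra_simps power2_eq_square)
  also have "\<dots> = (a*b + d*c*(1-x))*S + (a*c + d*b*x)*T" unfolding assms by (simp add: algebra_simps)
  finally show ?thesis .
qed

lemma id_oo: fixes S T x b c b' c' :: complex
  assumes "S^2 = x" "T^2 = 1 - x"
  shows "(b*S + c*T)*(b'*S + c'*T) = (b*b'*x + c*c'*(1-x)) + (b*c' + c*b')*S*T"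
proof -
  have "(b*S + c*T)*(b'*S + c'*T) = b*b'*(S^2) + c*c'*(T^2) + (b*c' + c*b')*S*T" by (simp add: algebra_simps power2_eq_square)
  also have "\<dots> = (b*b'*x + c*c'*(1-x)) + (b*c' + c*b')*S*T" unfolding assms by (simp add: algebra_simps)
  finally show ?thesis .
qed

lemma sqS: "p \<in> {0..1} \<Longrightarrow> (complex_of_real (sqrt p))^2 = of_real p"
  by (metis atLeastAtMost_iff of_real_power real_sqrt_pow2)
lemma sqT: "p \<in> {0..1} \<Longrightarrow> (complex_of_real (sqrt (1-p)))^2 = 1 - of_real p"
  by (metis atLeastAtMost_iff diff_ge_0_iff_ge of_real_1 of_real_diff of_real_power real_sqrt_pow2)

definition ev_form :: "(real \<Rightarrow> complex) \<Rightarrow> bool" where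
  "ev_form f \<longleftrightarrow> (\<exists>A D. \<forall>p\<in>{0..1}. f p = poly A (of_real p) + poly D (of_real p) * of_real (sqrt p) * of_real (sqrt (1-p)))"
definition od_form :: "(real \<Rightarrow> complex) \<Rightarrow> bool" where
  "od_form f \<longleftrightarrow> (\<exists>B C. \<forall>p\<in>{0..1}. f p = poly B (of_real p) * of_real (sqrt p) + poly C (of_real p) * of_real (sqrt (1-p)))"
definition form :: "bool \<Rightarrow> (real \<Rightarrow> complex) \<Rightarrow> bool" where
  "form e f = (if e then od_form f else ev_form f)"

lemma ev_ev: assumes "ev_form f" "ev_form g" shows "ev_form (\<lambda>p. f p * g p)"
proof -
  obtain A D where f: "\<forall>p\<in>{0..1}. f p = poly A (of_real p) + poly D (of_real p) * of_real (sqrt p) * of_real (sqrt (1-p))"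
    using assms(1) unfolding ev_form_def by blast
  obtain A' D' where g: "\<forall>p\<in>{0..1}. g p = poly A' (of_real p) + poly D' (of_real p) * of_real (sqrt p) * of_real (sqrt (1-p))"
    using assms(2) unfolding ev_form_def by blast
  show ?thesis unfolding ev_form_def
  proof (intro exI ballI)
    fix p :: real assume p: "p \<in> {0..1}"
    show "f p * g p = poly (A*A' + D*D'*[:0,1,-1:]) (of_real p) + poly (A*D' + D*A') (of_real p) * of_real (sqrt p) * of_real (sqrt (1-p))"
    proof -
      have "f p * g p = (poly A (of_real p) + poly D (of_real p) * of_real (sqrt p) * of_real (sqrt (1-p))) * (poly A' (of_real p) + poly D' (of_real p) * of_real (sqrt p) * of_real (sqrt (1-p)))" using f g p by simp
      also have "\<dots> = (poly A (of_real p) * poly A' (of_real p) + poly D (of_real p) * poly D' (of_real p) * ((of_real p) - (of_real p)^2)) + (poly A (of_real p) * poly D' (of_real p) + poly D (of_real p) * poly A' (of_real p)) * of_real (sqrt p) * of_real (sqrt (1-p))"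
        by (rule id_ee[OF sqS[OF p] sqT[OF p]])
      finally show ?thesis by (simp add: algebra_simps power2_eq_square)
    qed
  qed
qed

lemma ev_od: assumes "ev_form f" "od_form g" shows "od_form (\<lambda>p. f p * g p)"
proof -
  obtain A D where f: "\<forall>p\<in>{0..1}. f p = poly A (of_real p) + poly D (of_real p) * of_real (sqrt p) * of_real (sqrt (1-p))"
    using assms(1) unfolding ev_form_def by blast
  obtain B C where g: "\<forall>p\<in>{0..1}. g p = poly B (of_real p) * of_real (sqrt p) + poly C (of_real p) * of_real (sqrt (1-p))"
    using assms(2) unfolding od_form_def by blast
  show ?thesis unfolding od_form_def
  proof (intro exI ballI)
    fix p :: real assume p: "p \<in> {0..1}"
    show "f p * g p = poly (A*B + D*C*[:1,-1:]) (of_real p) * of_real (sqrt p) + poly (A*C + D*B*[:0,1:]) (of_real p) * of_real (sqrt (1-p))"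
    proof -
      have "f p * g p = (poly A (of_real p) + poly D (of_real p) * of_real (sqrt p) * of_real (sqrt (1-p))) * (poly B (of_real p) * of_real (sqrt p) + poly C (of_real p) * of_real (sqrt (1-p)))" using f g p by simp
      also have "\<dots> = (poly A (of_real p) * poly B (of_real p) + poly D (of_real p) * poly C (of_real p) * (1 - (of_real p))) * of_real (sqrt p) + (poly A (of_real p) * poly C (of_real p) + poly D (of_real p) * poly B (of_real p) * (of_real p)) * of_real (sqrt (1-p))"
        by (rule id_eo[OF sqS[OF p] sqT[OF p]])
      finally show ?thesis by (simp add: algebra_simps)
    qed
  qed
qed

lemma od_od: assumes "od_form f" "od_form g" shows "ev_form (\<lambda>p. f p * g p)"
proof -
  obtain B C where f: "\<forall>p\<in>{0..1}. f p = poly B (of_real p) * of_real (sqrt p) + poly C (of_real p) * of_real (sqrt (1-p))"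
    using assms(1) unfolding od_form_def by blast
  obtain B' C' where g: "\<forall>p\<in>{0..1}. g p = poly B' (of_real p) * of_real (sqrt p) + poly C' (of_real p) * of_real (sqrt (1-p))"
    using assms(2) unfolding od_form_def by blast
  show ?thesis unfolding ev_form_def
  proof (intro exI ballI)
    fix p :: real assume p: "p \<in> {0..1}"
    show "f p * g p = poly (B*B'*[:0,1:] + C*C'*[:1,-1:]) (of_real p) + poly (B*C' + C*B') (of_real p) * of_real (sqrt p) * of_real (sqrt (1-p))"
    proof -
      have "f p * g p = (poly B (of_real p) * of_real (sqrt p) + poly C (of_real p) * of_real (sqrt (1-p))) * (poly B' (of_real p) * of_real (sqrt p) + poly C' (of_real p) * of_real (sqrt (1-p)))" using f g p by simp
      also have "\<dots> = (poly B (of_real p) * poly B' (of_real p) * (of_real p) + poly C (of_real p) * poly C' (of_real p) * (1 - (of_real p))) + (poly B (of_real p) * poly C' (of_real p) + poly C (of_real p) * poly B' (of_real p)) * of_real (sqrt p) * of_real (sqrt (1-p))"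
        by (rule id_oo[OF sqS[OF p] sqT[OF p]])
      finally show ?thesis by (simp add: algebra_simps)
    qed
  qed
qed

lemma form_mult: "form e f \<Longrightarrow> form e' g \<Longrightarrow> form (e \<noteq> e') (\<lambda>p. f p * g p)"
  unfolding form_def
  using ev_ev ev_od od_od ev_od[of g f] by (cases e; cases e'; simp add: mult.commute)



lemma form_add: assumes "form e f" "form e g" shows "form e (\<lambda>p. f p + g p)"
proof (cases e)
  case True
  then obtain B C B' C' where f: "\<forall>p\<in>{0..1}. f p = poly B (of_real p) * of_real (sqrt p) + poly C (of_real p) * of_real (sqrt (1-p))"
    and g: "\<forall>p\<in>{0..1}. g p = poly B' (of_real p) * of_real (sqrt p) + poly C' (of_real p) * of_real (sqrt (1-p))"
    using assms unfolding form_def od_form_def by auto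
  have "\<forall>p\<in>{0..1}. f p + g p = poly (B+B') (of_real p) * of_real (sqrt p) + poly (C+C') (of_real p) * of_real (sqrt (1-p))"
    using f g by (simp add: algebra_simps)
  then have "od_form (\<lambda>p. f p + g p)" unfolding od_form_def by blast
  then show ?thesis using True by (simp add: form_def)
next
  case False
  then obtain A D A' D' where f: "\<forall>p\<in>{0..1}. f p = poly A (of_real p) + poly D (of_real p) * of_real (sqrt p) * of_real (sqrt (1-p))"
    and g: "\<forall>p\<in>{0..1}. g p = poly A' (of_real p) + poly D' (of_real p) * of_real (sqrt p) * of_real (sqrt (1-p))"
    using assms unfolding form_def ev_form_def by auto
  have "\<forall>p\<in>{0..1}. f p + g p = poly (A+A') (of_real p) + poly (D+D') (of_real p) * of_real (sqrt p) * of_real (sqrt (1-p))"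
    using f g by (simp add: algebra_simps)
  then have "ev_form (\<lambda>p. f p + g p)" unfolding ev_form_def by blast
  then show ?thesis using False by (simp add: form_def)
qed

lemma form_const: "form False (\<lambda>p. c)"
proof -
  have "\<forall>p\<in>{0..1}. c = poly [:c:] (of_real p) + poly 0 (of_real p) * of_real (sqrt p) * of_real (sqrt (1-p))" by simp
  then have "ev_form (\<lambda>p. c)" unfolding ev_form_def by blast
  then show ?thesis by (simp add: form_def)
qed

lemma form_zero: "form e (\<lambda>p. 0)"
proof -
  have "\<forall>p\<in>{0..1}. (0::complex) = poly 0 (of_real p) + poly 0 (of_real p) * of_real (sqrt p) * of_real (sqrt (1-p))" by simp
  moreover have "\<forall>p\<in>{0..1}. (0::complex) = poly 0 (of_real p) * of_real (sqrt p) + poly 0 (of_real p) * of_real (sqrt (1-p))" by simp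
  ultimately have "ev_form (\<lambda>p. 0)" "od_form (\<lambda>p. 0)" unfolding ev_form_def od_form_def by blast+
  then show ?thesis by (simp add: form_def)
qed

lemma form_cmult: "form e f \<Longrightarrow> form e (\<lambda>p. c * f p)"
  using form_mult[OF form_const, of e f c] by simp

lemma form_if: "form e f \<Longrightarrow> form e (\<lambda>p. if P then f p else 0)"
  by (cases P) (simp_all add: form_zero)

lemma form_sum: "finite S \<Longrightarrow> (\<And>j. form e (f j)) \<Longrightarrow> form e (\<lambda>p. \<Sum>j\<in>S. f j p)"
proof (induction S rule: finite_induct)
  case empty then show ?case by (simp add: form_zero)
next
  case (insert x F)
  then show ?case using form_add[of e "f x" "\<lambda>p. \<Sum>j\<in>F. f j p"] by simp
qed

lemma form_coin: "form True (\<lambda>p. qcoin p j)"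
proof -
  have "\<forall>p\<in>{0..1}. qcoin p j = poly (if j = 0 then 1 else 0) (of_real p) * of_real (sqrt p) + poly (if j = 1 then 1 else 0) (of_real p) * of_real (sqrt (1-p))"
    by (simp add: qcoin_def)
  then have "od_form (\<lambda>p. qcoin p j)" unfolding od_form_def by blast
  then show ?thesis by (simp add: form_def)
qed

lemma reach_form: "reach n v \<Longrightarrow> \<exists>e. \<forall>i. form e (\<lambda>p. v p i)"
proof (induction rule: reach.induct)
  case start
  then show ?case using form_const by blast
next
  case (add_coin n v)
  then obtain e where e: "\<forall>i. form e (\<lambda>p. v p i)" by blast
  have "form (e \<noteq> True) (\<lambda>p. tensor n 1 (v p) (qcoin p) i)" for i
    unfolding tensor_def by (rule form_if, rule form_mult[OF _ form_coin], use e in blast)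
  then show ?case by blast
next
  case (add_const n v a)
  then obtain e where e: "\<forall>i. form e (\<lambda>p. v p i)" by blast
  have "form (e \<noteq> False) (\<lambda>p. tensor n 1 (v p) (const_state a) i)" for i
    unfolding tensor_def by (rule form_if, rule form_mult[OF _ form_const], use e in blast)
  then show ?case by blast
next
  case (add_sim n v w)
  then obtain e e' where e: "\<forall>i. form e (\<lambda>p. v p i)" and e': "\<forall>i. form e' (\<lambda>p. w p i)" by blast
  have "form (e \<noteq> e') (\<lambda>p. tensor n 1 (v p) (w p) i)" for i
    unfolding tensor_def by (rule form_if, rule form_mult, use e in blast, use e' in blast)
  then show ?case by blast
next
  case (unitary n v U)
  then obtain e where e: "\<forall>i. form e (\<lambda>p. v p i)" by blast
  have "form e (\<lambda>p. apply_op n U (v p) i)" for i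
    unfolding apply_op_def by (rule form_if, rule form_sum, simp, rule form_cmult, use e in blast)
  then show ?case by blast
next
  case (measure n v b)
  then obtain e where e: "\<forall>i. form e (\<lambda>p. v p i)" by blast
  have "form e (\<lambda>p. measure_last n b (v p) i)" for i
    unfolding measure_last_def by (rule form_if, use e in blast)
  then show ?case by blast
qed



lemma order_W: "order 0 ([:0,1,-1:] :: complex poly) = 1"
proof -
  have W: "([:0,1,-1:] :: complex poly) = monom 1 1 * [:1,-1:]"
    by (simp add: monom_Suc)
  have "order 0 (monom (1::complex) 1 * [:1,-1:]) = order 0 (monom (1::complex) 1) + order 0 [:1,-1::complex:]"
  proof (rule order_mult)
    have "monom (1::complex) 1 \<noteq> 0" "[:1,-1::complex:] \<noteq> 0" by simp_all
    then show "monom (1::complex) 1 * [:1,-1:] \<noteq> 0" by (metis mult_eq_0_iff)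
  qed
  also have "\<dots> = 1" using order_0I[of "[:1,-1::complex:]" 0] by simp
  finally show ?thesis using W by simp
qed
lemma sq_lemma: fixes A D :: "complex poly" assumes "A*A = D*D*[:0,1,-1:]" shows "D = 0" "A = 0"
proof -
  show D: "D = 0"
  proof (rule ccontr)
    assume "D \<noteq> 0"
    moreover have "[:0,1,-1::complex:] \<noteq> 0" by simp
    ultimately have nz: "D*D*[:0,1,-1:] \<noteq> 0" by (metis mult_eq_0_iff)
    then have "A*A \<noteq> 0" using assms by simp
    then have "A \<noteq> 0" by auto
    have "order 0 (A*A) = 2 * order 0 A" using \<open>A \<noteq> 0\<close> by (simp add: order_mult)
    moreover have "order 0 (D*D*[:0,1,-1:]) = 2 * order 0 D + 1"
    proof -
      have o1: "order 0 (D*D*[:0,1,-1:]) = order 0 (D*D) + order 0 [:0,1,-1::complex:]" by (rule order_mult[OF nz])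
      have o2: "order 0 (D*D) = order 0 D + order 0 D" using \<open>D \<noteq> 0\<close> by (simp add: order_mult)
      show ?thesis unfolding o1 o2 order_W by simp
    qed
    moreover have "order 0 (A*A) = order 0 (D*D*[:0,1,-1:])" using assms by simp
    ultimately have "2 * order 0 A = 2 * order 0 D + (1::nat)" by simp
    then show False by presburger
  qed
  then show "A = 0" using assms by simp
qed

lemma to_even: assumes "form e f"
  shows "\<exists>A D. \<forall>p\<in>{0..<1}. f p * (if e then of_real (sqrt (1-p)) else 1) = poly A (of_real p) + poly D (of_real p) * of_real (sqrt p) * of_real (sqrt (1-p))"
proof (cases e)
  case True
  then obtain B C where f: "\<forall>p\<in>{0..1}. f p = poly B (of_real p) * of_real (sqrt p) + poly C (of_real p) * of_real (sqrt (1-p))"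
    using assms unfolding form_def od_form_def by auto
  have "\<forall>p\<in>{0..<1}. f p * (if e then of_real (sqrt (1-p)) else 1) = poly (C*[:1,-1:]) (of_real p) + poly B (of_real p) * of_real (sqrt p) * of_real (sqrt (1-p))"
  proof
    fix p :: real assume p: "p \<in> {0..<1}"
    then have p': "p \<in> {0..1}" by auto
    have "f p * (if e then of_real (sqrt (1-p)) else 1) = poly B (of_real p) * of_real (sqrt p) * of_real (sqrt (1-p)) + poly C (of_real p) * (of_real (sqrt (1-p)))^2"
      using f p' True by (simp add: algebra_simps power2_eq_square)
    then show "f p * (if e then of_real (sqrt (1-p)) else 1) = poly (C*[:1,-1:]) (of_real p) + poly B (of_real p) * of_real (sqrt p) * of_real (sqrt (1-p))"
      using sqT[OF p'] by (simp add: algebra_simps)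
  qed
  then show ?thesis by blast
next
  case False
  then obtain A D where f: "\<forall>p\<in>{0..1}. f p = poly A (of_real p) + poly D (of_real p) * of_real (sqrt p) * of_real (sqrt (1-p))"
    using assms unfolding form_def ev_form_def by auto
  then show ?thesis using False by auto
qed


lemma finite_real_roots: "(N::complex poly) \<noteq> 0 \<Longrightarrow> finite {p::real. poly N (of_real p) = 0}"
proof -
  assume "N \<noteq> 0"
  then have "finite {z. poly N z = 0}" by (rule poly_roots_finite)
  then have "finite (of_real -` {z. poly N z = 0} :: real set)"
    by (rule finite_vimageI) (simp add: inj_on_def)
  then show ?thesis by (simp add: vimage_def)
qed


lemma sqrt_rel: assumes "0 \<le> p" "p < 1"
  shows "complex_of_real (sqrt p) * of_real (sqrt (1-p)) = (1 - of_real p) * of_real (sqrt (p/(1-p)))"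
proof -
  define r where "r = sqrt (1-p)"
  have pos: "r > 0" using assms by (simp add: r_def)
  have rr: "r * r = 1 - p" using assms by (simp add: r_def)
  have "(1-p) * sqrt (p/(1-p)) = (r * r) * (sqrt p / r)"
    using assms by (simp add: rr real_sqrt_divide r_def)
  also have "\<dots> = sqrt p * r" using pos by simp
  finally have "sqrt p * sqrt (1-p) = (1-p) * sqrt (p/(1-p))" by (simp add: r_def)
  then have "complex_of_real (sqrt p * sqrt (1-p)) = of_real ((1-p) * sqrt (p/(1-p)))" by simp
  then show ?thesis by simp
qed

lemma only_if:
  fixes k0 k1 :: "real \<Rightarrow> complex"
  assumes k1_nz: "infinite {p \<in> {0..1}. k1 p \<noteq> 0}"
    and sim: "simulable k0 k1"
  shows "\<exists>g1 g2 g3 g4 :: complex poly. g2 \<noteq> 0 \<and> g4 \<noteq> 0 \<and>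
       finite {p \<in> {0..1}. \<not> (k1 p \<noteq> 0 \<and>
          k0 p / k1 p = poly g1 (complex_of_real p) / poly g2 (complex_of_real p)
                          * complex_of_real (sqrt (p / (1 - p)))
                        + poly g3 (complex_of_real p) / poly g4 (complex_of_real p))}"
proof -
  obtain v where rv: "reach 1 v" and finE: "finite {p \<in> {0..1}. \<not> ((v p 0 \<noteq> 0 \<or> v p 1 \<noteq> 0) \<and>
        (\<exists>c. c \<noteq> 0 \<and> v p 0 = c * k0 p \<and> v p 1 = c * k1 p))}" (is "finite ?E")
    using sim unfolding simulable_def by blast
  obtain e where fe: "\<forall>i. form e (\<lambda>p. v p i)" using reach_form[OF rv] by blast
  define \<mu> where "\<mu> p = (if e then complex_of_real (sqrt (1-p)) else 1)" for p
  obtain A0 D0 where e0: "\<forall>p\<in>{0..<1}. v p 0 * \<mu> p = poly A0 (of_real p) + poly D0 (of_real p) * of_real (sqrt p) * of_real (sqrt (1-p))"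
    using to_even[of e "\<lambda>p. v p 0"] fe unfolding \<mu>_def by blast
  obtain A1 D1 where e1: "\<forall>p\<in>{0..<1}. v p 1 * \<mu> p = poly A1 (of_real p) + poly D1 (of_real p) * of_real (sqrt p) * of_real (sqrt (1-p))"
    using to_even[of e "\<lambda>p. v p 1"] fe unfolding \<mu>_def by blast
  have mu_nz: "\<mu> p \<noteq> 0" if "p < 1" for p using that by (simp add: \<mu>_def)
  define N where "N = A1*A1 - D1*D1*[:0,1,-1:]"
  have N_nz: "N \<noteq> 0"
  proof
    assume "N = 0"
    then have "A1*A1 = D1*D1*[:0,1,-1:]" by (simp add: N_def)
    from sq_lemma[OF this] have A1: "A1 = 0" and D1: "D1 = 0" by auto
    have "infinite ({p \<in> {0..1}. k1 p \<noteq> 0} - (?E \<union> {1}))"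
      by (rule Diff_infinite_finite[OF _ k1_nz]) (use finE in simp)
    then obtain p where "p \<in> {p \<in> {0..1}. k1 p \<noteq> 0} - (?E \<union> {1})"
      using infinite_imp_nonempty by blast
    then have p: "p \<in> {0..1}" "k1 p \<noteq> 0" "p \<notin> ?E" "p \<noteq> 1" by auto
    then obtain c where "c \<noteq> 0" "v p 1 = c * k1 p" by blast
    then have "v p 1 \<noteq> 0" using p by simp
    moreover have "p \<in> {0..<1}" using p by auto
    then have "v p 1 * \<mu> p = poly A1 (of_real p) + poly D1 (of_real p) * of_real (sqrt p) * of_real (sqrt (1-p))" using e1 by blast
    then have "v p 1 * \<mu> p = 0" by (simp add: A1 D1)
    ultimately show False using mu_nz[of p] p by simp
  qed
  define g1 where "g1 = (D0*A1 - A0*D1) * [:1,-1:]"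
  define g3 where "g3 = A0*A1 - D0*D1*[:0,1,-1:]"
  have sub: "{p \<in> {0..1}. \<not> (k1 p \<noteq> 0 \<and>
          k0 p / k1 p = poly g1 (complex_of_real p) / poly N (complex_of_real p)
                          * complex_of_real (sqrt (p / (1 - p)))
                        + poly g3 (complex_of_real p) / poly N (complex_of_real p))}
        \<subseteq> ?E \<union> {1} \<union> {p. poly N (of_real p) = 0}"
  proof
    fix p assume pin: "p \<in> {p \<in> {0..1}. \<not> (k1 p \<noteq> 0 \<and>
          k0 p / k1 p = poly g1 (complex_of_real p) / poly N (complex_of_real p)
                          * complex_of_real (sqrt (p / (1 - p)))
                        + poly g3 (complex_of_real p) / poly N (complex_of_real p))}"
    show "p \<in> ?E \<union> {1} \<union> {p. poly N (of_real p) = 0}"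
    proof (rule ccontr)
      assume "\<not> ?thesis"
      then have p01: "p \<in> {0..<1}" and pE: "p \<notin> ?E" and Nnz: "poly N (of_real p) \<noteq> 0" using pin by (auto simp del: One_nat_def)
      then have p01': "p \<in> {0..1}" by auto
      define S where "S = complex_of_real (sqrt p)"
      define T where "T = complex_of_real (sqrt (1-p))"
      define x where "x = complex_of_real p"
      define X where "X = poly A1 x + poly D1 x * S * T"
      define Y where "Y = poly A1 x + (- poly D1 x) * S * T"
      define Z where "Z = poly A0 x + poly D0 x * S * T"
      have SS: "S^2 = x" "T^2 = 1 - x" unfolding S_def T_def x_def using sqS[OF p01'] sqT[OF p01'] by auto
      have XY: "X * Y = poly N x"
        unfolding X_def Y_def N_def using id_ee[OF SS, of "poly A1 x" "poly D1 x" "poly A1 x" "- poly D1 x"]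
        by (simp add: algebra_simps power2_eq_square)
      have ZY: "Z * Y = poly g3 x + (poly D0 x * poly A1 x - poly A0 x * poly D1 x) * (S * T)"
        unfolding Z_def Y_def g3_def using id_ee[OF SS, of "poly A0 x" "poly D0 x" "poly A1 x" "- poly D1 x"]
        by (simp add: algebra_simps power2_eq_square)
      have X: "v p 1 * \<mu> p = X" unfolding X_def S_def T_def x_def using e1 p01 by blast
      have Z: "v p 0 * \<mu> p = Z" unfolding Z_def S_def T_def x_def using e0 p01 by blast
      have Xnz: "X \<noteq> 0" using XY Nnz x_def by auto
      have Ynz: "Y \<noteq> 0" using XY Nnz x_def by auto
      define q where "q = complex_of_real (sqrt (p / (1 - p)))"
      have ST: "S * T = (1 - x) * q" unfolding S_def T_def x_def q_def using sqrt_rel[of p] p01 by auto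
      have v1: "v p 1 \<noteq> 0" using X Xnz by auto
      obtain c where c: "c \<noteq> 0" "v p 0 = c * k0 p" "v p 1 = c * k1 p" using pE p01' by blast
      have k1nz: "k1 p \<noteq> 0" using c v1 by auto
      have "k0 p / k1 p = v p 0 / v p 1" using c by simp
      also have "\<dots> = Z / X" unfolding X[symmetric] Z[symmetric] using mu_nz[of p] p01 by simp
      also have "\<dots> = Z * Y / (X * Y)" using Ynz by simp
      also have "\<dots> = Z * Y / poly N x" using XY by simp
      also have "\<dots> = (poly g3 x + poly g1 x * q) / poly N x"
        unfolding ZY ST g1_def by (simp add: algebra_simps)
      also have "\<dots> = poly g1 x / poly N x * q + poly g3 x / poly N x"
        by (simp add: add_divide_distrib)
      finally have "k0 p / k1 p = poly g1 x / poly N x * q + poly g3 x / poly N x" .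
      moreover from pin have "\<not> (k1 p \<noteq> 0 \<and> k0 p / k1 p = poly g1 x / poly N x * q + poly g3 x / poly N x)"
        unfolding x_def q_def by blast
      ultimately show False using k1nz by blast
    qed
  qed
  have "finite (?E \<union> {1} \<union> {p. poly N (of_real p) = 0})"
    using finE finite_real_roots[OF N_nz] by auto
  then have "finite {p \<in> {0..1}. \<not> (k1 p \<noteq> 0 \<and>
          k0 p / k1 p = poly g1 (complex_of_real p) / poly N (complex_of_real p)
                          * complex_of_real (sqrt (p / (1 - p)))
                        + poly g3 (complex_of_real p) / poly N (complex_of_real p))}"
    using sub finite_subset by blast
  then show ?thesis using N_nz by blast
qed



definition good :: "(real \<Rightarrow> complex) \<Rightarrow> bool" where
  "good r \<longleftrightarrow> (\<exists>v. reach 1 v \<and> finite {p \<in> {0..1}. \<not> (v p 1 \<noteq> 0 \<and> v p 0 = r p * v p 1)})"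

lemma sum4: "(\<Sum>k<(4::nat). f k) = f 0 + f 1 + f 2 + (f 3 :: complex)"
  by (simp add: eval_nat_numeral)
lemma sum2: "(\<Sum>k<(2::nat). f k) = f 0 + (f 1 :: complex)"
  by (simp add: eval_nat_numeral)
lemma all4: "(\<forall>i<(4::nat). P i) \<longleftrightarrow> P 0 \<and> P 1 \<and> P 2 \<and> P 3"
  by (auto simp: eval_nat_numeral less_Suc_eq)
lemma all2: "(\<forall>i<(2::nat). P i) \<longleftrightarrow> P 0 \<and> P 1"
  by (auto simp: eval_nat_numeral less_Suc_eq)

lemma good_cong: assumes "good r" "finite {p \<in> {0..1}. r p \<noteq> r' p}" shows "good r'"
proof -
  obtain v where v: "reach 1 v" "finite {p \<in> {0..1}. \<not> (v p 1 \<noteq> 0 \<and> v p 0 = r p * v p 1)}"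
    using assms(1) unfolding good_def by blast
  have "{p \<in> {0..1}. \<not> (v p 1 \<noteq> 0 \<and> v p 0 = r' p * v p 1)} \<subseteq>
        {p \<in> {0..1}. \<not> (v p 1 \<noteq> 0 \<and> v p 0 = r p * v p 1)} \<union> {p \<in> {0..1}. r p \<noteq> r' p}" by auto
  then have "finite {p \<in> {0..1}. \<not> (v p 1 \<noteq> 0 \<and> v p 0 = r' p * v p 1)}"
    using v(2) assms(2) finite_subset by blast
  then show ?thesis using v(1) unfolding good_def by blast
qed

lemma reach_single: "reach 0 v \<Longrightarrow> reach 1 (\<lambda>p. tensor 0 1 (v p) (const_state a))"
  using reach.add_const[of 0 v a] by simp

lemma t0: "tensor 0 1 (\<lambda>i. if i = 0 then 1 else 0) w 0 = w 0"
  by (simp add: tensor_def)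
lemma t1: "tensor 0 1 (\<lambda>i. if i = 0 then 1 else 0) w 1 = w 1"
  by (simp add: tensor_def)

lemma good_of_reach: assumes "reach 1 v" "\<forall>p\<in>{0..1} - F. v p 1 \<noteq> 0 \<and> v p 0 = r p * v p 1" "finite F"
  shows "good r"
proof -
  have "{p \<in> {0..1}. \<not> (v p 1 \<noteq> 0 \<and> v p 0 = r p * v p 1)} \<subseteq> F" using assms(2) by blast
  then show ?thesis unfolding good_def using assms(1,3) finite_subset by blast
qed

lemma good_const: "good (\<lambda>p. a)"
proof (rule good_of_reach[where F = "{}"])
  show "reach 1 (\<lambda>p. tensor 0 1 ((\<lambda>p i. if i = 0 then 1 else 0) p) (const_state a))"
    using reach.add_const[OF reach.start, of a] by simp
  have nz: "complex_of_real (sqrt ((cmod a)\<^sup>2 + 1)) \<noteq> 0" by (simp add: add_nonneg_eq_0_iff)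
  show "\<forall>p\<in>{0..1} - {}. tensor 0 1 ((\<lambda>p i. if i = 0 then 1 else 0) p) (const_state a) 1 \<noteq> 0 \<and>
       tensor 0 1 ((\<lambda>p i. if i = 0 then 1 else 0) p) (const_state a) 0 = a * tensor 0 1 ((\<lambda>p i. if i = 0 then 1 else 0) p) (const_state a) 1"
    unfolding t0 t1 using nz by (simp add: const_state_def)
qed simp

lemma good_coin: "good (\<lambda>p. of_real (sqrt p) / of_real (sqrt (1-p)))"
proof (rule good_of_reach[where F = "{1}"])
  show "reach 1 (\<lambda>p. tensor 0 1 ((\<lambda>p i. if i = 0 then 1 else 0) p) (qcoin p))"
    using reach.add_coin[OF reach.start] by simp
  show "\<forall>p\<in>{0..1} - {1}. tensor 0 1 ((\<lambda>p i. if i = 0 then 1 else 0) p) (qcoin p) 1 \<noteq> 0 \<and>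
       tensor 0 1 ((\<lambda>p i. if i = 0 then 1 else 0) p) (qcoin p) 0 = of_real (sqrt p) / of_real (sqrt (1-p)) * tensor 0 1 ((\<lambda>p i. if i = 0 then 1 else 0) p) (qcoin p) 1"
    unfolding t0 t1 by (auto simp: qcoin_def)
qed simp



lemma reach_comb: assumes "reach 1 v" "reach 1 w" "unitary_on 2 U"
  shows "reach 1 (\<lambda>p. measure_last 1 0 (apply_op 2 U (tensor 1 1 (v p) (w p))))"
proof -
  have "reach (1+1) (\<lambda>p. tensor 1 1 (v p) (w p))" by (rule reach.add_sim[OF assms(1,2)])
  then have "reach (1+1) (\<lambda>p. apply_op (1+1) U (tensor 1 1 (v p) (w p)))"
    by (rule reach.unitary) (use assms(3) in \<open>simp add: eval_nat_numeral\<close>)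
  from reach.measure[OF this, of 0] show ?thesis by (simp add: numeral_2_eq_2)
qed

lemma comb0: "measure_last 1 0 (apply_op 2 U (tensor 1 1 x y)) 0 = U 0 0 * (x 0 * y 0) + U 0 1 * (x 0 * y 1) + U 0 2 * (x 1 * y 0) + U 0 3 * (x 1 * y 1)"
  by (simp add: measure_last_def apply_op_def tensor_def sum4)
lemma comb1: "measure_last 1 0 (apply_op 2 U (tensor 1 1 x y)) 1 = U 2 0 * (x 0 * y 0) + U 2 1 * (x 0 * y 1) + U 2 2 * (x 1 * y 0) + U 2 3 * (x 1 * y 1)"
  by (simp add: measure_last_def apply_op_def tensor_def sum4)

definition Ucnot :: "nat \<Rightarrow> nat \<Rightarrow> complex" where
  "Ucnot i j = (if (i = j \<and> i < 2) \<or> (i = 2 \<and> j = 3) \<or> (i = 3 \<and> j = 2) then 1 else 0)"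

lemma Ucnot_unitary: "unitary_on 2 Ucnot"
  unfolding unitary_on_def by (simp add: all4 sum4 Ucnot_def)

definition hh :: complex where "hh = complex_of_real (1 / sqrt 2)"
lemma hh_sq: "cnj hh * hh = 1/2"
proof -
  have "(1 / sqrt 2) * (1 / sqrt (2::real)) = 1/2" by (simp add: field_simps)
  then have "complex_of_real ((1 / sqrt 2) * (1 / sqrt 2)) = 1/2" by simp
  then show ?thesis unfolding hh_def by (simp only: complex_cnj_complex_of_real of_real_mult)
qed

definition Usum :: "nat \<Rightarrow> nat \<Rightarrow> complex" where
  "Usum i j = (if i = 0 then (if j = 1 \<or> j = 2 then hh else 0)
     else if i = 1 then (if j = 1 then hh else if j = 2 then - hh else 0)
     else if i = 2 then (if j = 3 then 1 else 0)
     else if i = 3 then (if j = 0 then 1 else 0) else 0)"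

lemma Usum_unitary: "unitary_on 2 Usum"
  unfolding unitary_on_def using hh_sq by (simp add: all4 sum4 Usum_def mult.commute)

definition Uswap :: "nat \<Rightarrow> nat \<Rightarrow> complex" where
  "Uswap i j = (if (i = 0 \<and> j = 1) \<or> (i = 1 \<and> j = 0) then 1 else 0)"

lemma Uswap_unitary: "unitary_on 1 Uswap"
  unfolding unitary_on_def by (simp add: all2 sum2 Uswap_def)

lemma good_mult: assumes "good r" "good r'" shows "good (\<lambda>p. r p * r' p)"
proof -
  obtain v where v: "reach 1 v" "finite {p \<in> {0..1}. \<not> (v p 1 \<noteq> 0 \<and> v p 0 = r p * v p 1)}" (is "finite ?F1")
    using assms(1) unfolding good_def by blast
  obtain w where w: "reach 1 w" "finite {p \<in> {0..1}. \<not> (w p 1 \<noteq> 0 \<and> w p 0 = r' p * w p 1)}" (is "finite ?F2")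
    using assms(2) unfolding good_def by blast
  show ?thesis
  proof (rule good_of_reach[OF reach_comb[OF v(1) w(1) Ucnot_unitary], where F = "?F1 \<union> ?F2"])
    show "finite (?F1 \<union> ?F2)" using v w by simp
    show "\<forall>p\<in>{0..1} - (?F1 \<union> ?F2). measure_last 1 0 (apply_op 2 Ucnot (tensor 1 1 (v p) (w p))) 1 \<noteq> 0 \<and>
      measure_last 1 0 (apply_op 2 Ucnot (tensor 1 1 (v p) (w p))) 0 = r p * r' p * measure_last 1 0 (apply_op 2 Ucnot (tensor 1 1 (v p) (w p))) 1"
      unfolding comb0 comb1 by (auto simp: Ucnot_def)
  qed
qed

lemma good_add0: assumes "good r" "good r'" shows "good (\<lambda>p. hh * (r p + r' p))"
proof -
  obtain v where v: "reach 1 v" "finite {p \<in> {0..1}. \<not> (v p 1 \<noteq> 0 \<and> v p 0 = r p * v p 1)}" (is "finite ?F1")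
    using assms(1) unfolding good_def by blast
  obtain w where w: "reach 1 w" "finite {p \<in> {0..1}. \<not> (w p 1 \<noteq> 0 \<and> w p 0 = r' p * w p 1)}" (is "finite ?F2")
    using assms(2) unfolding good_def by blast
  show ?thesis
  proof (rule good_of_reach[OF reach_comb[OF v(1) w(1) Usum_unitary], where F = "?F1 \<union> ?F2"])
    show "finite (?F1 \<union> ?F2)" using v w by simp
    show "\<forall>p\<in>{0..1} - (?F1 \<union> ?F2). measure_last 1 0 (apply_op 2 Usum (tensor 1 1 (v p) (w p))) 1 \<noteq> 0 \<and>
      measure_last 1 0 (apply_op 2 Usum (tensor 1 1 (v p) (w p))) 0 = hh * (r p + r' p) * measure_last 1 0 (apply_op 2 Usum (tensor 1 1 (v p) (w p))) 1"
      unfolding comb0 comb1 by (auto simp: Usum_def algebra_simps)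
  qed
qed

lemma good_add: assumes "good r" "good r'" shows "good (\<lambda>p. r p + r' p)"
proof -
  have "good (\<lambda>p. complex_of_real (sqrt 2) * (hh * (r p + r' p)))"
    by (rule good_mult[OF good_const good_add0[OF assms]])
  moreover have e: "complex_of_real (sqrt 2) * hh = 1"
    unfolding hh_def by (simp flip: of_real_mult)
  moreover have "{p \<in> {0..1}. complex_of_real (sqrt 2) * (hh * (r p + r' p)) \<noteq> r p + r' p} = {}"
    by (simp add: mult.assoc[symmetric] e)
  ultimately show ?thesis using good_cong by (metis finite.emptyI)
qed

lemma good_inv: assumes "good r" "finite {p \<in> {0..1}. r p = 0}" shows "good (\<lambda>p. 1 / r p)"
proof -
  obtain v where v: "reach 1 v" "finite {p \<in> {0..1}. \<not> (v p 1 \<noteq> 0 \<and> v p 0 = r p * v p 1)}" (is "finite ?F1")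
    using assms(1) unfolding good_def by blast
  have r: "reach 1 (\<lambda>p. apply_op 1 Uswap (v p))" by (rule reach.unitary[OF v(1) Uswap_unitary])
  have a0: "apply_op 1 Uswap x 0 = x 1" and a1: "apply_op 1 Uswap x 1 = x 0" for x
    by (simp_all add: apply_op_def sum2 Uswap_def)
  show ?thesis
  proof (rule good_of_reach[OF r, where F = "?F1 \<union> {p \<in> {0..1}. r p = 0}"])
    show "finite (?F1 \<union> {p \<in> {0..1}. r p = 0})" using v assms(2) by simp
    show "\<forall>p\<in>{0..1} - (?F1 \<union> {p \<in> {0..1}. r p = 0}). apply_op 1 Uswap (v p) 1 \<noteq> 0 \<and>
       apply_op 1 Uswap (v p) 0 = 1 / r p * apply_op 1 Uswap (v p) 1"
      unfolding a0 a1 by auto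
  qed
qed



lemma aux_frac: "1 - y \<noteq> 0 \<Longrightarrow> 1 + y / (1 - y) = 1 / (1 - (y::complex))"
  by (simp add: field_simps)

lemma good_x: "good (\<lambda>p. complex_of_real p)"
proof -
  let ?q = "\<lambda>p. complex_of_real (sqrt p) / of_real (sqrt (1-p))"
  have "good (\<lambda>p. 1 + ?q p * ?q p)" by (rule good_add[OF good_const good_mult[OF good_coin good_coin]])
  moreover have "{p \<in> {0..1}. 1 + ?q p * ?q p \<noteq> 1 / (1 - complex_of_real p)} \<subseteq> {1}"
  proof
    fix p assume p: "p \<in> {p \<in> {0..1}. 1 + ?q p * ?q p \<noteq> 1 / (1 - complex_of_real p)}"
    show "p \<in> {1}"
    proof (rule ccontr)
      assume "p \<notin> {1}"
      then have p': "p \<in> {0..1}" "p \<noteq> 1" using p by auto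
      have nz: "1 - complex_of_real p \<noteq> 0"
      proof
        assume "1 - complex_of_real p = 0"
        then have "complex_of_real p = of_real 1" by simp
        then show False using p' of_real_eq_iff by blast
      qed
      have Tnz: "complex_of_real (sqrt (1-p)) \<noteq> 0" using p' by simp
      have "?q p * ?q p = (of_real (sqrt p))^2 / (of_real (sqrt (1-p)))^2" by (simp only: power2_eq_square times_divide_times_eq)
      also have "\<dots> = of_real p / (1 - of_real p)" by (simp only: sqS[OF p'(1)] sqT[OF p'(1)])
      finally have "1 + ?q p * ?q p = 1 + of_real p / (1 - complex_of_real p)" by simp
      also have "\<dots> = 1 / (1 - complex_of_real p)" using aux_frac[OF nz] .
      finally have "1 + ?q p * ?q p = 1 / (1 - complex_of_real p)" .
      then show False using p by simp
    qed
  qed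
  ultimately have g1: "good (\<lambda>p. 1 / (1 - complex_of_real p))"
    by (rule good_cong[OF _ finite_subset]) simp
  have "{p \<in> {0..1}. 1 / (1 - complex_of_real p) = 0} \<subseteq> {1}"
  proof
    fix p assume "p \<in> {p \<in> {0..1}. 1 / (1 - complex_of_real p) = 0}"
    then have "complex_of_real p = of_real 1" by simp
    then show "p \<in> {1}" using of_real_eq_iff by blast
  qed
  then have "finite {p \<in> {0..1}. 1 / (1 - complex_of_real p) = 0}" using finite_subset by blast
  from good_inv[OF g1 this] have "good (\<lambda>p. 1 - complex_of_real p)" by simp
  from good_add[OF good_mult[OF good_const[of "-1"] this] good_const[of 1]]
  show ?thesis by simp
qed

lemma good_poly: "good (\<lambda>p. poly g (complex_of_real p))"
proof (induction g)
  case 0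
  then show ?case using good_const[of 0] by simp
next
  case (pCons a q)
  from good_add[OF good_const[of a] good_mult[OF good_x pCons.IH]] show ?case by simp
qed

lemma good_sq: "good (\<lambda>p. complex_of_real (sqrt (p / (1 - p))))"
  using good_coin by (simp add: real_sqrt_divide)

lemma good_inv_poly: "g \<noteq> 0 \<Longrightarrow> good (\<lambda>p. 1 / poly g (complex_of_real p))"
  by (rule good_inv[OF good_poly]) (use finite_real_roots in auto)

lemma if_dir:
  fixes k0 k1 :: "real \<Rightarrow> complex"
  assumes "\<exists>g1 g2 g3 g4 :: complex poly. g2 \<noteq> 0 \<and> g4 \<noteq> 0 \<and>
       finite {p \<in> {0..1}. \<not> (k1 p \<noteq> 0 \<and>
          k0 p / k1 p = poly g1 (complex_of_real p) / poly g2 (complex_of_real p)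
                          * complex_of_real (sqrt (p / (1 - p)))
                        + poly g3 (complex_of_real p) / poly g4 (complex_of_real p))}"
  shows "simulable k0 k1"
proof -
  obtain g1 g2 g3 g4 :: "complex poly" where g: "g2 \<noteq> 0" "g4 \<noteq> 0" and
    fin: "finite {p \<in> {0..1}. \<not> (k1 p \<noteq> 0 \<and>
          k0 p / k1 p = poly g1 (complex_of_real p) / poly g2 (complex_of_real p)
                          * complex_of_real (sqrt (p / (1 - p)))
                        + poly g3 (complex_of_real p) / poly g4 (complex_of_real p))}" (is "finite ?E")
    using assms by blast
  have "good (\<lambda>p. poly g1 (complex_of_real p) * (1 / poly g2 (complex_of_real p))
                          * complex_of_real (sqrt (p / (1 - p)))
                        + poly g3 (complex_of_real p) * (1 / poly g4 (complex_of_real p)))"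
    by (intro good_add good_mult good_poly good_inv_poly good_sq g)
  then have "good (\<lambda>p. poly g1 (complex_of_real p) / poly g2 (complex_of_real p)
                          * complex_of_real (sqrt (p / (1 - p)))
                        + poly g3 (complex_of_real p) / poly g4 (complex_of_real p))"
    by simp
  then have "good (\<lambda>p. k0 p / k1 p)"
    by (rule good_cong) (rule finite_subset[OF _ fin], auto)
  then obtain v where v: "reach 1 v" and F: "finite {p \<in> {0..1}. \<not> (v p 1 \<noteq> 0 \<and> v p 0 = k0 p / k1 p * v p 1)}" (is "finite ?F")
    unfolding good_def by blast
  have "{p \<in> {0..1}. \<not> ((v p 0 \<noteq> 0 \<or> v p 1 \<noteq> 0) \<and>
        (\<exists>c. c \<noteq> 0 \<and> v p 0 = c * k0 p \<and> v p 1 = c * k1 p))} \<subseteq> ?F \<union> ?E"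
  proof
    fix p assume p: "p \<in> {p \<in> {0..1}. \<not> ((v p 0 \<noteq> 0 \<or> v p 1 \<noteq> 0) \<and>
        (\<exists>c. c \<noteq> 0 \<and> v p 0 = c * k0 p \<and> v p 1 = c * k1 p))}"
    show "p \<in> ?F \<union> ?E"
    proof (rule ccontr)
      assume "p \<notin> ?F \<union> ?E"
      then have pF: "p \<notin> ?F" and pE: "p \<notin> ?E" by auto
      have p01: "p \<in> {0..1}" using p by blast
      have a12: "v p 1 \<noteq> 0 \<and> v p 0 = k0 p / k1 p * v p 1" using pF p01 by blast
      have a3: "k1 p \<noteq> 0" using pE p01 by blast
      note a = a12[THEN conjunct1] a12[THEN conjunct2] a3
      have "v p 1 / k1 p \<noteq> 0 \<and> v p 0 = v p 1 / k1 p * k0 p \<and> v p 1 = v p 1 / k1 p * k1 p"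
        using a by simp
      then show False using p a by blast
    qed
  qed
  then have "finite {p \<in> {0..1}. \<not> ((v p 0 \<noteq> 0 \<or> v p 1 \<noteq> 0) \<and>
        (\<exists>c. c \<noteq> 0 \<and> v p 0 = c * k0 p \<and> v p 1 = c * k1 p))}"
    using F fin finite_subset by blast
  then show ?thesis unfolding simulable_def using v by blast
qed

theorem theorem1:
  fixes k0 k1 :: "real \<Rightarrow> complex"
  assumes norm: "\<forall>p \<in> {0..1}. (cmod (k0 p))\<^sup>2 + (cmod (k1 p))\<^sup>2 = 1"
    and k1_nz: "infinite {p \<in> {0..1}. k1 p \<noteq> 0}"
  shows "simulable k0 k1 \<longleftrightarrow>
    (\<exists>g1 g2 g3 g4 :: complex poly. g2 \<noteq> 0 \<and> g4 \<noteq> 0 \<and>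
       finite {p \<in> {0..1}. \<not> (k1 p \<noteq> 0 \<and>
          k0 p / k1 p = poly g1 (complex_of_real p) / poly g2 (complex_of_real p)
                          * complex_of_real (sqrt (p / (1 - p)))
                        + poly g3 (complex_of_real p) / poly g4 (complex_of_real p))})"
  using only_if[OF k1_nz] if_dir by blast


end
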